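(* Let $A$ be an alphabet and let $w,v\in A^{*}$ with $wv\ne\varepsilon$; put $u=wv$ and $u'=vw$. Then $\rho_{u}=\rho_{u'}$, and hence $S_{u}=S_{u'}$.
   Context: For $u\in A^{+}$, $\langle u\rangle=\{u^{m}:m\ge1\}$ and $\rho_{u}$ is the syntactic congruence of $\langle u\rangle$ on $A^{+}$: for $x,y\in A^{+}$, $x\rho_{u}y$ iff for all $p,q\in A^{*}$, $pxq\in\langle u\rangle\Leftrightarrow pyq\in\langle u\rangle$. $S_{u}=A^{+}/\rho_{u}$. *)

theory Defs
  imports Main
begin

text \<open>Words over an alphabet A are lists with entries in A; A^+ is the set of
nonempty such lists, A^* is lists A.\<close>

definition plus_words :: "'a set \<Rightarrow> 'a list set" where
  "plus_words A = lists A - {[]}"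

definition pow_lang :: "'a list \<Rightarrow> 'a list set" where
  "pow_lang u = {concat (replicate m u) | m. m \<ge> 1}"

definition synt_cong :: "'a set \<Rightarrow> 'a list set \<Rightarrow> ('a list \<times> 'a list) set" where
  "synt_cong A L = {(x, y). x \<in> plus_words A \<and> y \<in> plus_words A \<and>
      (\<forall>p \<in> lists A. \<forall>q \<in> lists A. (p @ x @ q \<in> L \<longleftrightarrow> p @ y @ q \<in> L))}"

definition rho :: "'a set \<Rightarrow> 'a list \<Rightarrow> ('a list \<times> 'a list) set" where
  "rho A u = synt_cong A (pow_lang u)"

definition S_of :: "'a set \<Rightarrow> 'a list \<Rightarrow> 'a list set set" where
  "S_of A u = plus_words A // rho A u"

end

theory Submission
  imports Defs
begin

lemma key: "w @ concat (replicate m (v@w)) @ v = concat (replicate (Suc m) (w@v))"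
  by (induction m) auto

lemma fwd: "p @ z @ q \<in> pow_lang (v@w) \<Longrightarrow> (w@p) @ z @ (q@v) \<in> pow_lang (w@v)"
proof -
  assume "p @ z @ q \<in> pow_lang (v@w)"
  then obtain m where m: "m \<ge> 1" "p @ z @ q = concat (replicate m (v@w))"
    unfolding pow_lang_def by blast
  have "(w@p) @ z @ (q@v) = w @ concat (replicate m (v@w)) @ v" using m(2) by (metis append.assoc)
  also have "\<dots> = concat (replicate (Suc m) (w@v))" by (rule key)
  finally show ?thesis unfolding pow_lang_def by force
qed

lemma bwd: "z \<noteq> [] \<Longrightarrow> (w@p) @ z @ (q@v) \<in> pow_lang (w@v) \<Longrightarrow> p @ z @ q \<in> pow_lang (v@w)"
proof -
  assume z: "z \<noteq> []" and "(w@p) @ z @ (q@v) \<in> pow_lang (w@v)"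
  then obtain k where k: "k \<ge> 1" "(w@p) @ z @ (q@v) = concat (replicate k (w@v))"
    unfolding pow_lang_def by blast
  then obtain m where km: "k = Suc m" by (cases k) auto
  have "w @ (p @ z @ q) @ v = w @ concat (replicate m (v@w)) @ v"
    using k(2) km key[of w m v] by simp
  then have e: "p @ z @ q = concat (replicate m (v@w))" by simp
  have "m \<noteq> 0" using e z by (cases m) auto
  then show ?thesis using e unfolding pow_lang_def by force
qed

lemma sub:
  assumes "w \<in> lists A" "v \<in> lists A"
  shows "rho A (w @ v) \<subseteq> rho A (v @ w)"
proof
  fix xy assume "xy \<in> rho A (w @ v)"
  then obtain x y where xy: "xy = (x,y)" and x: "x \<in> plus_words A" and y: "y \<in> plus_words A"
    and H: "\<forall>p \<in> lists A. \<forall>q \<in> lists A. (p @ x @ q \<in> pow_lang (w@v) \<longleftrightarrow> p @ y @ q \<in> pow_lang (w@v))"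
    unfolding rho_def synt_cong_def by blast
  have "\<forall>p \<in> lists A. \<forall>q \<in> lists A. (p @ x @ q \<in> pow_lang (v@w) \<longleftrightarrow> p @ y @ q \<in> pow_lang (v@w))"
  proof (intro ballI)
    fix p q assume p: "p \<in> lists A" and q: "q \<in> lists A"
    have wp: "w@p \<in> lists A" and qv: "q@v \<in> lists A" using p q assms by auto
    have xn: "x \<noteq> []" and yn: "y \<noteq> []" using x y unfolding plus_words_def by auto
    show "p @ x @ q \<in> pow_lang (v@w) \<longleftrightarrow> p @ y @ q \<in> pow_lang (v@w)"
      using H[rule_format, OF wp qv] fwd[of p x q v w] fwd[of p y q v w]
        bwd[OF xn, of w p q v] bwd[OF yn, of w p q v] by blast
  qed
  then show "xy \<in> rho A (v @ w)" using xy x y unfolding rho_def synt_cong_def by blast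
qed

theorem lemma2p4:
  fixes A :: "'a set" and w v :: "'a list"
  assumes "w \<in> lists A" and "v \<in> lists A" and "w @ v \<noteq> []"
  shows "rho A (w @ v) = rho A (v @ w) \<and> S_of A (w @ v) = S_of A (v @ w)"
proof -
  have e: "rho A (w @ v) = rho A (v @ w)" using sub[OF assms(1,2)] sub[OF assms(2,1)] by blast
  then show ?thesis unfolding S_of_def by simp
qed

end
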